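(* Let $p\ge 1$ and let $\sigma$ be a permutation of $[n]$ with exactly $p$ non-left-to-right-maxima that belongs to the basis $\mathcal{B}_{p-1}$. Write $\sigma_{k+1}=n$ and assume $k\ge 1$. Let $\pi$ be the permutation of $[k]$ order-isomorphic to $\sigma_1\sigma_2\cdots\sigma_k$. Then $\pi$ has exactly $p-n+k+1$ non-left-to-right-maxima and $\pi$ belongs to the basis $\mathcal{B}_{p-n+k}$.
   Context: A right-jump transforms $\sigma=\sigma_1\cdots\sigma_n$ into $\sigma_1\cdots\sigma_{i-1}\sigma_{i+1}\cdots\sigma_j\sigma_i\sigma_{j+1}\cdots\sigma_n$ for some $1\le i<j\le n$. A left-to-right maximum of $\sigma$ is an entry $\sigma_i$ with $\sigma_k<\sigma_i$ for all $k<i$; every other entry is a non-left-to-right-maximum. A permutation $\pi$ is a pattern of $\sigma$ (written $\pi\prec\sigma$) if some subsequence of $\sigma$ is order-isomorphic to $\pi$. $\mathcal{C}_q$ is the set of all permutations (of any length $n$) obtainable from the identity $12\cdots n$ by at most $q$ right-jumps. The basis $\mathcal{B}_q$ is the set of permutations $\sigma\notin\mathcal{C}_q$ such that every pattern $\pi\prec\sigma$ with $\pi\ne\sigma$ lies in $\mathcal{C}_q$. *)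

theory Defs
  imports Main
begin

definition is_perm :: "nat list \<Rightarrow> bool" where
  "is_perm \<sigma> \<longleftrightarrow> distinct \<sigma> \<and> set \<sigma> = {1..length \<sigma>}"

text \<open>Right-jump (0-indexed positions i < j): the entry at position i is moved
  to just after the entry at position j.\<close>
definition right_jump :: "nat list \<Rightarrow> nat list \<Rightarrow> bool" where
  "right_jump \<sigma> \<tau> \<longleftrightarrow> (\<exists>i j. i < j \<and> j < length \<sigma> \<and>
     \<tau> = take i \<sigma> @ take (j - i) (drop (i + 1) \<sigma>) @ [\<sigma> ! i] @ drop (j + 1) \<sigma>)"

definition C :: "nat \<Rightarrow> nat list set" where
  "C q = {\<sigma>. \<exists>n m. m \<le> q \<and> (right_jump ^^ m) [1..<Suc n] \<sigma>}"

definition order_iso :: "nat list \<Rightarrow> nat list \<Rightarrow> bool" where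
  "order_iso xs ys \<longleftrightarrow> length xs = length ys \<and>
     (\<forall>a < length xs. \<forall>b < length xs. xs ! a < xs ! b \<longleftrightarrow> ys ! a < ys ! b)"

definition pattern :: "nat list \<Rightarrow> nat list \<Rightarrow> bool" where
  "pattern \<pi> \<sigma> \<longleftrightarrow> is_perm \<pi> \<and> (\<exists>I. I \<subseteq> {..<length \<sigma>} \<and> order_iso \<pi> (nths \<sigma> I))"

definition basis :: "nat \<Rightarrow> nat list set" where
  "basis q = {\<sigma>. is_perm \<sigma> \<and> \<sigma> \<notin> C q \<and> (\<forall>\<pi>. pattern \<pi> \<sigma> \<and> \<pi> \<noteq> \<sigma> \<longrightarrow> \<pi> \<in> C q)}"

definition nlrm :: "nat list \<Rightarrow> nat" where
  "nlrm \<sigma> = card {i. i < length \<sigma> \<and> \<not> (\<forall>k < i. \<sigma> ! k < \<sigma> ! i)}"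

end

theory Submission
  imports Defs
begin


fun cnt :: "nat list \<Rightarrow> nat list \<Rightarrow> nat" where
  "cnt pre [] = 0"
| "cnt pre (y#ys) = (if \<exists>z\<in>set pre. y \<le> z then 1 else 0) + cnt (pre@[y]) ys"

lemma card_Suc_split:
  "card {i. i < Suc m \<and> P i} = (if P 0 then 1 else 0) + card {i. i < m \<and> P (Suc i)}"
proof -
  have e: "{i. i < Suc m \<and> P i} = (if P 0 then {0} else {}) \<union> Suc ` {i. i < m \<and> P (Suc i)}"
    by (auto simp: less_Suc_eq_0_disj image_iff)
  have "card ((if P 0 then {0} else {}) \<union> Suc ` {i. i < m \<and> P (Suc i)})
     = card (if P 0 then {0::nat} else {}) + card (Suc ` {i. i < m \<and> P (Suc i)})"
    by (rule card_Un_disjoint) auto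
  also have "card (Suc ` {i. i < m \<and> P (Suc i)}) = card {i. i < m \<and> P (Suc i)}"
    by (rule card_image) auto
  finally show ?thesis using e by simp
qed

lemma cnt_card: "cnt pre ys = card {i. i < length ys \<and> (\<exists>z\<in>set (pre @ take i ys). ys!i \<le> z)}"
proof (induction ys arbitrary: pre)
  case Nil then show ?case by simp
next
  case (Cons y ys)
  show ?case
    using Cons.IH[of "pre@[y]"] by (simp only: length_Cons card_Suc_split) simp
qed

lemma nlrm_cnt: "nlrm xs = cnt [] xs"
proof -
  have "{i. i < length xs \<and> \<not> (\<forall>k < i. xs ! k < xs ! i)} =
        {i. i < length xs \<and> (\<exists>z\<in>set ([] @ take i xs). xs!i \<le> z)}"
  proof -
    have "(\<exists>z\<in>set (take i xs). xs!i \<le> z) \<longleftrightarrow> (\<exists>k<i. xs!i \<le> xs!k)" if "i < length xs" for i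
    proof
      assume "\<exists>z\<in>set (take i xs). xs!i \<le> z"
      then obtain k where "k < length (take i xs)" "xs!i \<le> take i xs ! k" by (auto simp: in_set_conv_nth)
      then show "\<exists>k<i. xs!i \<le> xs!k" by auto
    next
      assume "\<exists>k<i. xs!i \<le> xs!k"
      then obtain k where "k < i" "xs!i \<le> xs!k" by blast
      then show "\<exists>z\<in>set (take i xs). xs!i \<le> z" using that
        by (intro bexI[of _ "xs!k"]) (auto simp: in_set_conv_nth intro!: exI[of _ k])
    qed
    then show ?thesis by (auto simp: not_less)
  qed
  then show ?thesis by (simp add: nlrm_def cnt_card)
qed

lemma cnt_append: "cnt pre (xs@ys) = cnt pre xs + cnt (pre@xs) ys"
  by (induction xs arbitrary: pre) auto

lemma cnt_mono: "(\<And>y. (\<exists>z\<in>set pre. y \<le> z) \<Longrightarrow> (\<exists>z\<in>set pre'. y\<le>z)) \<Longrightarrow> cnt pre ys \<le> cnt pre' ys"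
proof (induction ys arbitrary: pre pre')
  case Nil then show ?case by simp
next
  case (Cons y ys)
  have "cnt (pre@[y]) ys \<le> cnt (pre'@[y]) ys"
    by (rule Cons.IH) (use Cons.prems in auto)
  then show ?case using Cons.prems by auto
qed

lemma cnt_cong: assumes h: "(\<And>y. (\<exists>z\<in>set pre. y \<le> z) \<longleftrightarrow> (\<exists>z\<in>set pre'. y\<le>z))" shows "cnt pre ys = cnt pre' ys"
proof (rule antisym)
  show "cnt pre ys \<le> cnt pre' ys" by (rule cnt_mono) (simp add: h)
  show "cnt pre' ys \<le> cnt pre ys" by (rule cnt_mono) (simp add: h)
qed

lemma cnt_le: "cnt pre ys \<le> length ys"
proof (induction ys arbitrary: pre)
  case (Cons y ys) then show ?case using Cons.IH[of "pre@[y]"] by (simp add: le_SucI)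
qed simp

lemma cnt_all: "(\<forall>y\<in>set ys. \<exists>z\<in>set pre. y\<le>z) \<Longrightarrow> cnt pre ys = length ys"
  by (induction ys arbitrary: pre) auto

lemma cnt_zero_iff: "cnt pre ys = 0 \<longleftrightarrow> sorted_wrt (<) ys \<and> (\<forall>z\<in>set pre. \<forall>y\<in>set ys. z < y)"
proof (induction ys arbitrary: pre)
  case (Cons y ys)
  have "cnt pre (y#ys) = 0 \<longleftrightarrow> (\<forall>z\<in>set pre. z < y) \<and> cnt (pre@[y]) ys = 0"
    by (auto simp: not_le not_less)
  also have "\<dots> \<longleftrightarrow> (\<forall>z\<in>set pre. z < y) \<and> sorted_wrt (<) ys \<and> (\<forall>z\<in>set (pre@[y]). \<forall>w\<in>set ys. z < w)"
    using Cons.IH[of "pre@[y]"] by simp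
  also have "\<dots> \<longleftrightarrow> sorted_wrt (<) (y#ys) \<and> (\<forall>z\<in>set pre. \<forall>w\<in>set (y#ys). z < w)"
    by auto
  finally show ?case .
qed simp

lemma cnt_nonzero: "cnt pre ys \<noteq> 0 \<Longrightarrow> \<exists>A x D. ys = A @ x # D \<and> (\<exists>z\<in>set (pre@A). x \<le> z)"
proof (induction ys arbitrary: pre)
  case Nil then show ?case by simp
next
  case (Cons y ys)
  show ?case
  proof (cases "\<exists>z\<in>set pre. y \<le> z")
    case True then show ?thesis by (intro exI[of _ "[]"]) auto
  next
    case False
    then have "cnt (pre@[y]) ys \<noteq> 0" using Cons.prems by simp
    from Cons.IH[OF this] obtain A x D where "ys = A @ x # D" "\<exists>z\<in>set (pre@[y]@A). x \<le> z" by auto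
    then show ?thesis by (intro exI[of _ "y#A"]) auto
  qed
qed

lemma rj_split:
  assumes "right_jump \<sigma> \<tau>"
  shows "\<exists>A x B D. \<sigma> = A @ x # B @ D \<and> \<tau> = A @ B @ x # D"
proof -
  obtain i j where ij: "i < j" "j < length \<sigma>"
    and t: "\<tau> = take i \<sigma> @ take (j - i) (drop (i + 1) \<sigma>) @ [\<sigma> ! i] @ drop (j + 1) \<sigma>"
    using assms unfolding right_jump_def by blast
  have "drop (i+1) \<sigma> = take (j - i) (drop (i + 1) \<sigma>) @ drop (j+1) \<sigma>"
  proof -
    have "drop (j - i) (drop (i+1) \<sigma>) = drop (j+1) \<sigma>" using ij by simp
    then show ?thesis by (metis append_take_drop_id)
  qed
  moreover have "\<sigma> = take i \<sigma> @ \<sigma>!i # drop (i+1) \<sigma>"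
    using ij by (simp add: id_take_nth_drop)
  ultimately show ?thesis using t
    by (intro exI[of _ "take i \<sigma>"] exI[of _ "\<sigma>!i"] exI[of _ "take (j - i) (drop (i + 1) \<sigma>)"]
      exI[of _ "drop (j+1) \<sigma>"]) simp
qed

lemma rj_cnt: "right_jump \<sigma> \<tau> \<Longrightarrow> cnt [] \<tau> \<le> cnt [] \<sigma> + 1"
proof -
  assume "right_jump \<sigma> \<tau>"
  then obtain A x B D where e: "\<sigma> = A @ x # B @ D" "\<tau> = A @ B @ x # D" using rj_split by blast
  have 1: "cnt A B \<le> cnt (A@[x]) B" by (rule cnt_mono) auto
  have 2: "cnt (A@B@[x]) D = cnt (A@[x]@B) D" by (rule cnt_cong) auto
  have 3: "cnt (A@B) [x] \<le> 1" using cnt_le[of _ "[x]"] by simp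
  have t: "cnt [] \<tau> = cnt [] A + cnt A B + cnt (A@B) [x] + cnt (A@B@[x]) D"
    unfolding e(2) using cnt_append[of "[]" A "B @ [x] @ D"] cnt_append[of A B "[x] @ D"]
      cnt_append[of "A@B" "[x]" D] by simp
  have s: "cnt [] \<sigma> = cnt [] A + cnt A [x] + cnt (A@[x]) B + cnt (A@[x]@B) D"
    unfolding e(1) using cnt_append[of "[]" A "[x] @ B @ D"] cnt_append[of A "[x]" "B @ D"]
      cnt_append[of "A@[x]" B D] by simp
  show ?thesis using 1 2 3 t s by linarith
qed


lemma C_cnt: "(right_jump ^^ m) xs ys \<Longrightarrow> cnt [] ys \<le> cnt [] xs + m"
proof (induction m arbitrary: ys)
  case 0 then show ?case by simp
next
  case (Suc m)
  then obtain zs where "(right_jump ^^ m) xs zs" "right_jump zs ys" by auto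
  then show ?case using Suc.IH rj_cnt by fastforce
qed

lemma C_nlrm: "\<sigma> \<in> C q \<Longrightarrow> nlrm \<sigma> \<le> q"
proof -
  assume "\<sigma> \<in> C q"
  then obtain n m where "m \<le> q" "(right_jump ^^ m) [1..<Suc n] \<sigma>" unfolding C_def by blast
  moreover have "cnt [] [1..<Suc n] = 0" by (simp add: cnt_zero_iff del: upt_Suc)
  ultimately show ?thesis using C_cnt by (fastforce simp: nlrm_cnt)
qed

lemma perm_sorted_id: "is_perm \<sigma> \<Longrightarrow> sorted_wrt (<) \<sigma> \<Longrightarrow> \<sigma> = [1..<Suc (length \<sigma>)]"
proof -
  assume p: "is_perm \<sigma>" and s: "sorted_wrt (<) \<sigma>"
  have s2: "sorted_wrt (<) [1..<Suc (length \<sigma>)]" by (simp del: upt_Suc)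
  have "set [1..<Suc (length \<sigma>)] = set \<sigma>" using p unfolding is_perm_def
    by (simp del: upt_Suc add: atLeastLessThanSuc_atLeastAtMost)
  then show ?thesis using strict_sorted_equal[OF s2 s] by simp
qed

lemma perm_step:
  assumes p: "is_perm \<sigma>" and c: "cnt [] \<sigma> = Suc m"
  shows "\<exists>\<sigma>'. is_perm \<sigma>' \<and> length \<sigma>' = length \<sigma> \<and> cnt [] \<sigma>' = m \<and> right_jump \<sigma>' \<sigma>"
proof -
  obtain A x D where e: "\<sigma> = A @ x # D" and ex: "\<exists>z\<in>set A. x \<le> z"
    using cnt_nonzero[of "[]" \<sigma>] c by auto
  define A1 where "A1 = takeWhile (\<lambda>z. z < x) A"
  define A2 where "A2 = dropWhile (\<lambda>z. z < x) A"
  have A: "A = A1 @ A2" unfolding A1_def A2_def by simp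
  have "A2 \<noteq> []" using ex unfolding A2_def by (auto simp: dropWhile_eq_Nil_conv not_less)
  then obtain a A2' where a: "A2 = a # A2'" by (cases A2) auto
  have "\<not> a < x" using a unfolding A2_def by (metis hd_dropWhile list.sel(1) list.simps(3))
  moreover have "a \<noteq> x" using p e A a unfolding is_perm_def by auto
  ultimately have ax: "x < a" by simp
  have A1x: "\<forall>z\<in>set A1. z < x" unfolding A1_def by (auto dest: set_takeWhileD)
  define \<sigma>' where "\<sigma>' = A1 @ x # A2 @ D"
  have rj: "right_jump \<sigma>' \<sigma>"
    unfolding right_jump_def
    by (rule exI[of _ "length A1"], rule exI[of _ "length A1 + length A2"])
       (use a in \<open>simp add: \<sigma>'_def e A\<close>)
  have perm: "is_perm \<sigma>'" using p unfolding is_perm_def \<sigma>'_def e A by auto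
  have c1: "cnt [] \<sigma> = cnt [] A1 + cnt A1 A2 + cnt (A1@A2) [x] + cnt (A1@A2@[x]) D"
    unfolding e A using cnt_append[of "[]" A1 "A2 @ [x] @ D"] cnt_append[of A1 A2 "[x] @ D"]
      cnt_append[of "A1@A2" "[x]" D] by simp
  have c2: "cnt [] \<sigma>' = cnt [] A1 + cnt A1 [x] + cnt (A1@[x]) A2 + cnt (A1@[x]@A2) D"
    unfolding \<sigma>'_def using cnt_append[of "[]" A1 "[x] @ A2 @ D"] cnt_append[of A1 "[x]" "A2 @ D"]
      cnt_append[of "A1@[x]" A2 D] by simp
  have "cnt (A1@A2) [x] = 1" using ex A by auto
  moreover have "cnt A1 [x] = 0" using A1x by auto
  moreover have "cnt (A1@[x]@[a]) A2' = cnt (A1@[a]) A2'"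
    by (rule cnt_cong) (use ax in auto)
  then have "cnt (A1@[x]) A2 = cnt A1 A2" using a ax by simp
  moreover have "cnt (A1@A2@[x]) D = cnt (A1@[x]@A2) D" by (rule cnt_cong) auto
  ultimately have "cnt [] \<sigma>' = m" using c c1 c2 by simp
  moreover have "length \<sigma>' = length \<sigma>" unfolding \<sigma>'_def e A by simp
  ultimately show ?thesis using rj perm by blast
qed

lemma perm_C_aux: "is_perm \<sigma> \<Longrightarrow> cnt [] \<sigma> = m \<Longrightarrow> (right_jump ^^ m) [1..<Suc (length \<sigma>)] \<sigma>"
proof (induction m arbitrary: \<sigma>)
  case 0
  then have "\<sigma> = [1..<Suc (length \<sigma>)]" using perm_sorted_id cnt_zero_iff by blast
  then show ?case by (metis relpowp.simps(1))
next
  case (Suc m)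
  then obtain \<sigma>' where "is_perm \<sigma>'" "length \<sigma>' = length \<sigma>" "cnt [] \<sigma>' = m" "right_jump \<sigma>' \<sigma>"
    using perm_step by blast
  then show ?case using Suc.IH by (metis relpowp_Suc_I)
qed

lemma perm_C: "is_perm \<sigma> \<Longrightarrow> nlrm \<sigma> \<le> q \<Longrightarrow> \<sigma> \<in> C q"
  unfolding C_def nlrm_cnt using perm_C_aux by blast



lemma oi_nlrm: assumes "order_iso xs ys" shows "nlrm xs = nlrm ys"
proof -
  have l: "length xs = length ys" using assms by (simp add: order_iso_def)
  have "(\<forall>k<i. xs!k < xs!i) \<longleftrightarrow> (\<forall>k<i. ys!k < ys!i)" if "i < length xs" for i
  proof -
    have "xs!k < xs!i \<longleftrightarrow> ys!k < ys!i" if "k < i" for k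
      using assms \<open>i < length xs\<close> that unfolding order_iso_def by simp
    then show ?thesis by blast
  qed
  then have "{i. i < length xs \<and> \<not> (\<forall>k < i. xs ! k < xs ! i)} = {i. i < length ys \<and> \<not> (\<forall>k < i. ys ! k < ys ! i)}"
    using l by auto
  then show ?thesis unfolding nlrm_def by simp
qed

lemma oi_trans: "order_iso xs ys \<Longrightarrow> order_iso ys zs \<Longrightarrow> order_iso xs zs"
  unfolding order_iso_def by simp

lemma oi_zip: "order_iso xs ys \<longleftrightarrow> length xs = length ys \<and>
   (\<forall>p\<in>set (zip xs ys). \<forall>q\<in>set (zip xs ys). fst p < fst q \<longleftrightarrow> snd p < snd q)"
proof
  assume h: "order_iso xs ys"
  then have "length xs = length ys" by (simp add: order_iso_def)
  moreover have "fst p < fst q \<longleftrightarrow> snd p < snd q" if pp: "p\<in>set (zip xs ys)" and qq: "q\<in>set (zip xs ys)" for p q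
  proof -
    obtain a where "xs!a = fst p" "ys!a = snd p" "a < length xs" using pp unfolding in_set_zip by blast
    moreover obtain b where "xs!b = fst q" "ys!b = snd q" "b < length xs" using qq unfolding in_set_zip by blast
    ultimately show ?thesis using h unfolding order_iso_def by metis
  qed
  ultimately show "length xs = length ys \<and>
   (\<forall>p\<in>set (zip xs ys). \<forall>q\<in>set (zip xs ys). fst p < fst q \<longleftrightarrow> snd p < snd q)" by blast
next
  assume h: "length xs = length ys \<and>
   (\<forall>p\<in>set (zip xs ys). \<forall>q\<in>set (zip xs ys). fst p < fst q \<longleftrightarrow> snd p < snd q)"
  have "xs!a < xs!b \<longleftrightarrow> ys!a < ys!b" if "a < length xs" "b < length xs" for a b
  proof -
    have "(xs!a, ys!a) \<in> set (zip xs ys)" "(xs!b, ys!b) \<in> set (zip xs ys)"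
      using that h by (auto simp: in_set_zip)
    then show ?thesis using h by fastforce
  qed
  then show "order_iso xs ys" using h unfolding order_iso_def by blast
qed

lemma oi_nths: assumes "order_iso xs ys" shows "order_iso (nths xs I) (nths ys I)"
proof -
  define Z where "Z = nths (zip xs ys) I"
  have l: "length xs = length ys" using assms by (simp add: order_iso_def)
  have f: "map fst Z = nths xs I" unfolding Z_def using l by (simp flip: nths_map)
  have s: "map snd Z = nths ys I" unfolding Z_def using l by (simp flip: nths_map)
  have z: "zip (nths xs I) (nths ys I) = Z" using f s zip_map_fst_snd by metis
  have "set Z \<subseteq> set (zip xs ys)" unfolding Z_def by (rule set_nths_subset)
  then show ?thesis using assms f s z unfolding oi_zip
    by (metis length_map subsetD)
qed

lemma std_exists:
  assumes d: "distinct xs"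
  shows "\<exists>\<pi>. is_perm \<pi> \<and> order_iso \<pi> xs"
proof -
  define S where "S = set xs"
  define f where "f x = card {y\<in>S. y \<le> x}" for x
  have fin: "finite S" unfolding S_def by simp
  have mono: "f x < f x'" if "x \<in> S" "x' \<in> S" "x < x'" for x x'
  proof -
    have m: "x' \<in> {y\<in>S. y \<le> x'}" "x' \<notin> {y\<in>S. y \<le> x}" using that by auto
    have "{y\<in>S. y \<le> x} \<subset> {y\<in>S. y \<le> x'}"
      by (rule psubsetI) (use that in auto, use m in blast)
    then show ?thesis unfolding f_def by (rule psubset_card_mono[rotated]) (simp add: fin)
  qed
  have iff: "f x < f x' \<longleftrightarrow> x < x'" if "x \<in> S" "x' \<in> S" for x x'
    using mono[OF that] mono[OF that(2,1)] by (cases x x' rule: linorder_cases) auto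
  have inj: "inj_on f S"
    by (rule inj_onI) (metis iff less_irrefl linorder_neq_iff)
  have sub: "f ` S \<subseteq> {1..card S}"
  proof
    fix v assume "v \<in> f ` S"
    then obtain x where x: "x \<in> S" "v = f x" by auto
    have "card {y\<in>S. y \<le> x} > 0" using fin x by (subst card_gt_0_iff) auto
    then have "1 \<le> v" unfolding x f_def by simp
    moreover have "v \<le> card S" unfolding x f_def using fin by (intro card_mono) auto
    ultimately show "v \<in> {1..card S}" by simp
  qed
  have eq: "f ` S = {1..card S}"
    by (rule card_subset_eq) (use sub inj in \<open>simp_all add: card_image\<close>)
  define \<pi> where "\<pi> = map f xs"
  have "is_perm \<pi>" unfolding is_perm_def \<pi>_def
    using d inj eq distinct_card[OF d] by (simp add: distinct_map S_def)
  moreover have "order_iso \<pi> xs" unfolding order_iso_def \<pi>_def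
    using iff by (simp add: S_def)
  ultimately show ?thesis by blast
qed

lemma perm_nth_card:
  assumes p: "is_perm \<pi>" and i: "i < length \<pi>"
  shows "\<pi>!i = card {j. j < length \<pi> \<and> \<pi>!j \<le> \<pi>!i}"
proof -
  have d: "distinct \<pi>" and s: "set \<pi> = {1..length \<pi>}" using p unfolding is_perm_def by auto
  have "(nth \<pi>) ` {j. j < length \<pi> \<and> \<pi>!j \<le> \<pi>!i} = {y \<in> set \<pi>. y \<le> \<pi>!i}"
    by (auto simp: in_set_conv_nth)
  also have "\<dots> = {1..\<pi>!i}" using s nth_mem[OF i] by auto
  finally have e: "(nth \<pi>) ` {j. j < length \<pi> \<and> \<pi>!j \<le> \<pi>!i} = {1..\<pi>!i}" .
  have "card {j. j < length \<pi> \<and> \<pi>!j \<le> \<pi>!i} = card ((nth \<pi>) ` {j. j < length \<pi> \<and> \<pi>!j \<le> \<pi>!i})"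
    by (rule card_image[symmetric]) (rule inj_on_nth[OF d], auto)
  then show ?thesis using e by simp
qed

lemma perm_oi_eq:
  assumes "is_perm \<pi>" "is_perm \<pi>'" "order_iso \<pi> \<pi>'"
  shows "\<pi> = \<pi>'"
proof (rule nth_equalityI)
  show l: "length \<pi> = length \<pi>'" using assms(3) by (simp add: order_iso_def)
  fix i assume i: "i < length \<pi>"
  have "{j. j < length \<pi> \<and> \<pi>!j \<le> \<pi>!i} = {j. j < length \<pi>' \<and> \<pi>'!j \<le> \<pi>'!i}"
    using assms(3) i l unfolding order_iso_def by (auto simp: not_less[symmetric])
  then show "\<pi>!i = \<pi>'!i" using perm_nth_card[OF assms(1) i] perm_nth_card[OF assms(2)] i l by simp
qed

lemma nths_restrict: "nths xs I = nths xs {i\<in>I. i < length xs}"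
  unfolding nths_def by (rule arg_cong[where f="map fst"], rule filter_cong) (auto simp: set_zip)

lemma split_cnt: "(\<forall>y\<in>set X. y < n) \<Longrightarrow> (\<forall>y\<in>set D. y \<le> n) \<Longrightarrow> cnt [] (X @ n # D) = cnt [] X + length D"
  using cnt_append[of "[]" X "n # D"] cnt_all[of D "X @ [n]"] by (auto simp: not_le)



theorem mainTheorem6:
  fixes \<sigma> \<pi> :: "nat list" and n p k :: nat
  assumes "p \<ge> 1"
    and "is_perm \<sigma>" and "length \<sigma> = n"
    and "nlrm \<sigma> = p"
    and "\<sigma> \<in> basis (p - 1)"
    and "k < n" and "\<sigma> ! k = n"
    and "k \<ge> 1"
    and "is_perm \<pi>" and "length \<pi> = k" and "order_iso \<pi> (take k \<sigma>)"
  shows "n \<le> p + k \<and> nlrm \<pi> = p + k + 1 - n \<and> \<pi> \<in> basis (p + k - n)"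
proof -
  note as = assms
  define A where "A = take k \<sigma>"
  define D where "D = drop (Suc k) \<sigma>"
  have e: "\<sigma> = A @ n # D" unfolding A_def D_def using as(3,6,7) id_take_nth_drop[of k \<sigma>] by simp
  have dist: "distinct \<sigma>" and set\<sigma>: "set \<sigma> = {1..n}" using as(2,3) unfolding is_perm_def by auto
  have lA: "length A = k" unfolding A_def using as(3,6) by simp
  have lD: "length D = n - Suc k" unfolding D_def using as(3) by simp
  have An: "\<forall>y\<in>set A. y < n"
  proof
    fix y assume y: "y \<in> set A"
    then have "y \<in> {1..n}" using set\<sigma> e by auto
    moreover have "y \<noteq> n" using dist e y by auto
    ultimately show "y < n" by simp
  qed
  have Dn: "\<forall>y\<in>set D. y \<le> n" using set\<sigma> e by auto
  have bas0: "\<forall>\<rho>. pattern \<rho> \<sigma> \<and> \<rho> \<noteq> \<sigma> \<longrightarrow> \<rho> \<in> C (p - 1)" using as(5) by (simp add: basis_def)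
  have basis: "\<And>\<rho>. pattern \<rho> \<sigma> \<Longrightarrow> \<rho> \<noteq> \<sigma> \<Longrightarrow> nlrm \<rho> \<le> p - 1"
    using bas0 C_nlrm by blast
  have np: "nlrm \<sigma> = nlrm A + length D"
    unfolding e nlrm_cnt using split_cnt[OF An Dn] .
  have npi: "nlrm \<pi> = nlrm A" using oi_nlrm as(11) unfolding A_def by simp
  have pos: "nlrm A \<ge> 1"
  proof -
    obtain a A' where aA: "A = a # A'" using lA as(8) by (cases A) auto
    define T where "T = A' @ n # D"
    have dT: "distinct T" using dist e aA unfolding T_def by simp
    obtain \<rho> where \<rho>: "is_perm \<rho>" "order_iso \<rho> T" using std_exists[OF dT] by blast
    have "T = nths \<sigma> {i. i \<ge> 1}" unfolding T_def e aA by (simp flip: drop_eq_nths)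
    also have "\<dots> = nths \<sigma> {i\<in>{i. i \<ge> 1}. i < length \<sigma>}" by (rule nths_restrict)
    finally have Teq: "T = nths \<sigma> {i\<in>{i. i \<ge> 1}. i < length \<sigma>}" .
    have "pattern \<rho> \<sigma>" unfolding pattern_def
      by (intro conjI exI[of _ "{i\<in>{i. i \<ge> 1}. i < length \<sigma>}"]) (use \<rho> Teq in auto)
    moreover have "\<rho> \<noteq> \<sigma>"
    proof -
      have "length \<rho> = length T" using \<rho>(2) by (simp add: order_iso_def)
      moreover have "length T < length \<sigma>" by (simp add: T_def e aA)
      ultimately show ?thesis by auto
    qed
    ultimately have "nlrm \<rho> \<le> p - 1" by (rule basis)
    moreover have "nlrm \<rho> = nlrm T" by (rule oi_nlrm[OF \<rho>(2)])
    moreover have "nlrm T = nlrm A' + length D" unfolding T_def nlrm_cnt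
      using split_cnt[of A' n D] An Dn aA by simp
    ultimately show ?thesis using np as(4) as(1) by linarith
  qed
  have arith1: "n \<le> p + k" "p + k + 1 - n = nlrm A" "p + k - n = nlrm A - 1"
    using np lD as(4) as(6) pos by linarith+
  have notC: "\<pi> \<notin> C (p + k - n)"
  proof
    assume "\<pi> \<in> C (p + k - n)"
    then have "nlrm \<pi> \<le> p + k - n" by (rule C_nlrm)
    then show False using npi arith1 pos by linarith
  qed
  have pats: "\<tau> \<in> C (p + k - n)" if tp: "pattern \<tau> \<pi>" and tn: "\<tau> \<noteq> \<pi>" for \<tau>
  proof -
    have tperm: "is_perm \<tau>" using tp unfolding pattern_def by blast
    obtain I where I0: "I \<subseteq> {..<length \<pi>}" and oi: "order_iso \<tau> (nths \<pi> I)"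
      using tp unfolding pattern_def by blast
    have I: "I \<subseteq> {..<k}" using I0 as(10) by simp
    define X where "X = nths A I"
    have oX: "order_iso \<tau> X" unfolding X_def A_def using oi_trans[OF oi oi_nths[OF as(11)]] .
    define J where "J = I \<union> {k..<n}"
    have "nths A J = nths A {i\<in>J. i < length A}" by (rule nths_restrict)
    also have "{i\<in>J. i < length A} = {i\<in>I. i < length A}" unfolding J_def using lA by auto
    also have "nths A \<dots> = X" unfolding X_def by (rule nths_restrict[symmetric])
    finally have nA: "nths A J = X" .
    have nB: "nths (n # D) {j. j + length A \<in> J} = n # D"
      by (rule nths_all) (use lA lD as(6) in \<open>auto simp: J_def\<close>)
    have nJ: "nths \<sigma> J = X @ n # D" unfolding e nths_append nA nB by simp
    have dJ: "distinct (X @ n # D)" using distinct_nthsI[OF dist, of J] nJ by simp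
    obtain \<rho> where \<rho>: "is_perm \<rho>" "order_iso \<rho> (X @ n # D)" using std_exists[OF dJ] by blast
    have JI: "J \<subseteq> {..<length \<sigma>}" using I as(3,6) unfolding J_def by auto
    have pat: "pattern \<rho> \<sigma>" unfolding pattern_def
      by (intro conjI exI[of _ J]) (use \<rho> JI nJ in simp_all)
    have XA: "\<forall>y\<in>set X. y < n" using An set_nths_subset[of A I] unfolding X_def by blast
    have "\<rho> \<noteq> \<sigma>"
    proof
      assume "\<rho> = \<sigma>"
      moreover have "length \<rho> = length (X @ n # D)" using \<rho>(2) by (simp add: order_iso_def)
      ultimately have "length X = k" using e lA by simp
      then have c: "card {i. i < length A \<and> i \<in> I} = k" unfolding X_def length_nths .
      have "{i. i < length A \<and> i \<in> I} = {..<k}"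
        by (rule card_subset_eq) (use c lA in auto)
      then have "\<forall>i < length \<pi>. i \<in> I" using lA as(10) by auto
      then have "nths \<pi> I = \<pi>" by (rule nths_all)
      then have "\<tau> = \<pi>" using perm_oi_eq[OF tperm as(9)] oi by simp
      then show False using tn by simp
    qed
    then have "nlrm \<rho> \<le> p - 1" using pat basis by blast
    moreover have "nlrm \<rho> = nlrm X + length D" using oi_nlrm[OF \<rho>(2)] split_cnt[OF XA Dn]
      by (simp add: nlrm_cnt)
    moreover have "nlrm \<tau> = nlrm X" by (rule oi_nlrm[OF oX])
    ultimately have "nlrm \<tau> \<le> p + k - n" using np as(4) arith1 pos by linarith
    then show ?thesis using perm_C tperm by blast
  qed
  have "\<pi> \<in> basis (p + k - n)" unfolding basis_def using notC pats as(9) by blast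
  then show ?thesis using arith1 npi by simp
qed

end
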